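(* Let $1\le k_0<p$ with $k_0\ge n$. Then for every $\gamma<1/2$ and every integer $1\le\Delta\le p-k_0$, one has $\rho^*_{\gamma}[k_0,\Delta]=\infty$; that is, for every $\rho>0$ and every test $\phi$, $R(\phi;k_0,\Delta,\rho)>\gamma$.
   Context: Model: for integers $n,p\ge1$, an unknown $\theta^*\in\mathbb R^p$, $\sigma>0$ and a $p\times p$ covariance matrix $\Sigma$, one observes $(Y,\mathbf X)$ where the rows of $\mathbf X\in\mathbb R^{n\times p}$ are i.i.d. $\mathcal N(0,\Sigma)$, $\epsilon\sim\mathcal N(0,I_n)$ is independent of $\mathbf X$, and $Y=\mathbf X\theta^*+\sigma\epsilon$. $\mathbb P_{\theta^*,\Sigma,\sigma}$ denotes the law of $(Y,\mathbf X)$. $\|\theta\|_0$ is the number of nonzero entries of $\theta$; $\mathbb B_0[k]=\{\theta\in\mathbb R^p:\|\theta\|_0\le k\}$; $d_2(\theta,A)=\inf_{u\in A}\|\theta-u\|_2$. Independent setting: $\Sigma=I_p$ and $\sigma>0$ is fixed and known. A test is a measurable $\{0,1\}$-valued function $\phi$ of $(Y,\mathbf X)$. For $\rho>0$, $R(\phi;k_0,\Delta,\rho)=\sup_{\theta\in\mathbb B_0[k_0]}\mathbb P_{\theta,I_p,\sigma}[\phi=1]+\sup_{\theta\in\mathbb B_0[k_0+\Delta],\,d_2(\theta,\mathbb B_0[k_0])\ge\rho\sigma}\mathbb P_{\theta,I_p,\sigma}[\phi=0]$; $\rho_\gamma(\phi;k_0,\Delta)=\sup\{\rho>0:R(\phi;k_0,\Delta,\rho)>\gamma\}$;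 the minimax separation distance is $\rho^*_\gamma[k_0,\Delta]=\inf_\phi\rho_\gamma(\phi;k_0,\Delta)$. *)

theory Defs
  imports "HOL-Probability.Probability"
begin

definition gauss :: "real measure" where
  "gauss = density lborel (\<lambda>x. ennreal (std_normal_density x))"

text \<open>Vectors in R^p are functions nat => real vanishing outside {..<p}.\<close>
definition vecs :: "nat \<Rightarrow> (nat \<Rightarrow> real) set" where
  "vecs p = {\<theta>. \<forall>j\<ge>p. \<theta> j = 0}"

definition l0 :: "nat \<Rightarrow> (nat \<Rightarrow> real) \<Rightarrow> nat" where
  "l0 p \<theta> = card {j\<in>{..<p}. \<theta> j \<noteq> 0}"

definition B0 :: "nat \<Rightarrow> nat \<Rightarrow> (nat \<Rightarrow> real) set" where
  "B0 p k = {\<theta> \<in> vecs p. l0 p \<theta> \<le> k}"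

definition l2dist :: "nat \<Rightarrow> (nat \<Rightarrow> real) \<Rightarrow> (nat \<Rightarrow> real) \<Rightarrow> real" where
  "l2dist p \<theta> u = sqrt (\<Sum>j<p. (\<theta> j - u j)\<^sup>2)"

definition d2 :: "nat \<Rightarrow> (nat \<Rightarrow> real) \<Rightarrow> (nat \<Rightarrow> real) set \<Rightarrow> real" where
  "d2 p \<theta> A = Inf ((\<lambda>u. l2dist p \<theta> u) ` A)"

text \<open>Observation space: pairs (Y, X) with Y in R^n and X an n x p matrix
  (indexed by pairs (i,j), i<n, j<p).\<close>
definition obs_space :: "nat \<Rightarrow> nat \<Rightarrow> ((nat \<Rightarrow> real) \<times> (nat \<times> nat \<Rightarrow> real)) measure" where
  "obs_space n p = (PiM {..<n} (\<lambda>_. borel)) \<Otimes>\<^sub>M (PiM ({..<n} \<times> {..<p}) (\<lambda>_. borel))"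

text \<open>Underlying randomness (epsilon, X): all entries i.i.d. N(0,1)
  (independent setting, Sigma = I_p).\<close>
definition noise_space :: "nat \<Rightarrow> nat \<Rightarrow> ((nat \<Rightarrow> real) \<times> (nat \<times> nat \<Rightarrow> real)) measure" where
  "noise_space n p = (PiM {..<n} (\<lambda>_. gauss)) \<Otimes>\<^sub>M (PiM ({..<n} \<times> {..<p}) (\<lambda>_. gauss))"

definition obs_map :: "nat \<Rightarrow> nat \<Rightarrow> real \<Rightarrow> (nat \<Rightarrow> real) \<Rightarrow>
    (nat \<Rightarrow> real) \<times> (nat \<times> nat \<Rightarrow> real) \<Rightarrow> (nat \<Rightarrow> real) \<times> (nat \<times> nat \<Rightarrow> real)" where
  "obs_map n p \<sigma> \<theta> = (\<lambda>(e, X). ((\<lambda>i\<in>{..<n}. (\<Sum>j<p. X (i, j) * \<theta> j) + \<sigma> * e i), X))"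

definition law :: "nat \<Rightarrow> nat \<Rightarrow> real \<Rightarrow> (nat \<Rightarrow> real) \<Rightarrow> ((nat \<Rightarrow> real) \<times> (nat \<times> nat \<Rightarrow> real)) measure" where
  "law n p \<sigma> \<theta> = distr (noise_space n p) (obs_space n p) (obs_map n p \<sigma> \<theta>)"

definition is_test :: "nat \<Rightarrow> nat \<Rightarrow> ((nat \<Rightarrow> real) \<times> (nat \<times> nat \<Rightarrow> real) \<Rightarrow> nat) \<Rightarrow> bool" where
  "is_test n p \<phi> \<longleftrightarrow> \<phi> \<in> measurable (obs_space n p) (count_space UNIV)
     \<and> (\<forall>\<omega>. \<phi> \<omega> \<in> {0, 1})"

definition rej_prob :: "nat \<Rightarrow> nat \<Rightarrow> real \<Rightarrow> (nat \<Rightarrow> real) \<Rightarrow>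
    ((nat \<Rightarrow> real) \<times> (nat \<times> nat \<Rightarrow> real) \<Rightarrow> nat) \<Rightarrow> nat \<Rightarrow> real" where
  "rej_prob n p \<sigma> \<theta> \<phi> b = measure (law n p \<sigma> \<theta>) {\<omega> \<in> space (obs_space n p). \<phi> \<omega> = b}"

definition risk :: "nat \<Rightarrow> nat \<Rightarrow> real \<Rightarrow> ((nat \<Rightarrow> real) \<times> (nat \<times> nat \<Rightarrow> real) \<Rightarrow> nat)
    \<Rightarrow> nat \<Rightarrow> nat \<Rightarrow> real \<Rightarrow> real" where
  "risk n p \<sigma> \<phi> k0 \<Delta> \<rho> =
     Sup ((\<lambda>\<theta>. rej_prob n p \<sigma> \<theta> \<phi> 1) ` B0 p k0)
   + Sup ((\<lambda>\<theta>. rej_prob n p \<sigma> \<theta> \<phi> 0) `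
          {\<theta> \<in> B0 p (k0 + \<Delta>). d2 p \<theta> (B0 p k0) \<ge> \<rho> * \<sigma>})"

end

theory Submission
  imports Defs "Jordan_Normal_Form.Determinant"
begin

lemma mat_delete_upd_row:
  assumes "j < Suc m"
  shows "mat_delete (mat (Suc m) (Suc m) (X((m,m):=x))) m j = mat_delete (mat (Suc m) (Suc m) X) m j"
  unfolding mat_delete_def by (rule eq_matI) auto

lemma mat_delete_last:
  "mat_delete (mat (Suc m) (Suc m) X) m m = mat m m X"
  unfolding mat_delete_def by (rule eq_matI) auto

lemma det_affine:
  fixes X :: "nat \<times> nat \<Rightarrow> real"
  shows "det (mat (Suc m) (Suc m) (X((m,m):=x))) =
     x * det (mat m m X) + det (mat (Suc m) (Suc m) (X((m,m):=0)))"
proof -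
  let ?M = "\<lambda>y. mat (Suc m) (Suc m) (X((m,m):=y))"
  have cof: "cofactor (?M y) m j = cofactor (mat (Suc m) (Suc m) X) m j" if "j < Suc m" for y j
    unfolding cofactor_def mat_delete_upd_row[OF that] ..
  have lap: "det (?M y) = (\<Sum>j<m. X (m,j) * cofactor (mat (Suc m) (Suc m) X) m j)
        + y * cofactor (mat (Suc m) (Suc m) X) m m" for y
  proof -
    have "det (?M y) = (\<Sum>j<Suc m. ?M y $$ (m,j) * cofactor (?M y) m j)"
      by (rule laplace_expansion_row) auto
    also have "\<dots> = (\<Sum>j<Suc m. ?M y $$ (m,j) * cofactor (mat (Suc m) (Suc m) X) m j)"
      by (rule sum.cong) (auto simp: cof)
    also have "\<dots> = (\<Sum>j<m. X (m,j) * cofactor (mat (Suc m) (Suc m) X) m j)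
        + y * cofactor (mat (Suc m) (Suc m) X) m m"
      by (simp add: sum.lessThan_Suc)
    finally show ?thesis .
  qed
  have "cofactor (mat (Suc m) (Suc m) X) m m = det (mat m m X)"
    unfolding cofactor_def mat_delete_last by (simp add: power_add flip: power_mult_distrib)
  then show ?thesis using lap[of x] lap[of 0] by simp
qed

lemma gauss_prob: "prob_space gauss"
  unfolding gauss_def using prob_space_normal_density by simp

lemma sets_gauss[measurable_cong]: "sets gauss = sets borel"
  unfolding gauss_def by simp

lemma space_gauss[simp]: "space gauss = UNIV"
  unfolding gauss_def by simp

lemma gauss_singleton: "emeasure gauss {c} = 0"
proof -
  have "{c} \<in> null_sets gauss"
  proof -
    have "AE x in lborel. x \<in> {c} \<longrightarrow> ennreal (std_normal_density x) = 0"
      using AE_lborel_singleton[of c] by (rule eventually_mono) simp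
    then show ?thesis unfolding gauss_def by (subst null_sets_density_iff) auto
  qed
  then show ?thesis by auto
qed

lemma product_prob_gauss: "product_prob_space (\<lambda>_. gauss)"
  unfolding product_prob_space_def product_prob_space_axioms_def product_sigma_finite_def
  using gauss_prob prob_space_imp_sigma_finite by auto

lemma meas_coord_gauss[measurable]:
  "z \<in> J \<Longrightarrow> (\<lambda>X. X z) \<in> borel_measurable (PiM J (\<lambda>_. gauss))"
proof -
  assume "z \<in> J"
  then have "(\<lambda>X. X z) \<in> measurable (PiM J (\<lambda>_. gauss)) gauss" by (rule measurable_component_singleton)
  then show ?thesis using measurable_cong_sets[OF refl sets_gauss, of "PiM J (\<lambda>_. gauss)"] by simp
qed

lemma det_mat_meas:
  assumes "m \<le> n" "m \<le> p"
  shows "(\<lambda>X. det (mat m m X)) \<in> borel_measurable (PiM ({..<n} \<times> {..<p}) (\<lambda>_. gauss))"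
proof -
  have eq: "det (mat m m X) = (\<Sum>\<pi> \<in> {\<pi>. \<pi> permutes {0..<m}}. signof \<pi> * (\<Prod>i = 0..<m. X (i, \<pi> i)))" for X :: "nat\<times>nat \<Rightarrow> real"
    by (subst det_def'[of _ m]) (auto intro!: sum.cong prod.cong simp: permutes_in_image)
  show ?thesis unfolding eq
  proof (intro borel_measurable_sum borel_measurable_times borel_measurable_const borel_measurable_prod)
    fix \<pi> i assume "\<pi> \<in> {\<pi>. \<pi> permutes {0..<m}}" "i \<in> {0..<m}"
    then have "\<pi> i < m" using permutes_in_image[of \<pi> "{0..<m}" i] by auto
    then have "(i, \<pi> i) \<in> {..<n} \<times> {..<p}" using assms \<open>i \<in> {0..<m}\<close> by auto
    then show "(\<lambda>X. X (i, \<pi> i)) \<in> borel_measurable (PiM ({..<n} \<times> {..<p}) (\<lambda>_. gauss))" by measurable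
  qed
qed

lemma mat_small_upd: "mat m m (X((m,m):=x)) = mat m m X"
  by (rule eq_matI) auto

lemma det_mat0: "det (mat 0 0 X) = (1::real)"
  by (simp add: det_def)

lemma det_AE:
  assumes "m \<le> n" "m \<le> p"
  shows "AE X in PiM ({..<n}\<times>{..<p}) (\<lambda>_. gauss). det (mat m m X) \<noteq> (0::real)"
  using assms
proof (induction m)
  case 0
  show ?case by (simp add: det_mat0)
next
  case (Suc m)
  define J where "J = {..<n}\<times>{..<p}"
  define Q where "Q = PiM J (\<lambda>_. gauss)"
  define z where "z = (m,m)"
  have IH: "AE X in Q. det (mat m m X) \<noteq> (0::real)" unfolding Q_def J_def using Suc.IH Suc.prems Suc_leD by blast
  define Nset where "Nset = {X \<in> space Q. det (mat m m X) \<noteq> (0::real) \<and> det (mat (Suc m) (Suc m) X) = 0}"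
  have Nset_sets: "Nset \<in> sets Q"
  proof -
    have m1: "(\<lambda>X. det (mat m m X)) \<in> borel_measurable Q"
      unfolding Q_def J_def by (rule det_mat_meas) (use Suc.prems in auto)
    have m2: "(\<lambda>X. det (mat (Suc m) (Suc m) X)) \<in> borel_measurable Q"
      unfolding Q_def J_def by (rule det_mat_meas) (use Suc.prems in auto)
    have s1: "{X\<in>space Q. det (mat m m X) = (0::real)} \<in> sets Q"
      by (rule measurable_equality_set[OF m1, OF borel_measurable_const])
    have s2: "{X\<in>space Q. det (mat (Suc m) (Suc m) X) = (0::real)} \<in> sets Q"
      by (rule measurable_equality_set[OF m2, OF borel_measurable_const])
    have "Nset = {X\<in>space Q. det (mat (Suc m) (Suc m) X) = (0::real)} - {X\<in>space Q. det (mat m m X) = (0::real)}"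
      unfolding Nset_def by auto
    then show ?thesis using sets.Diff[OF s2 s1] by (simp only:)
  qed
  interpret product_prob_space "\<lambda>_::nat\<times>nat. gauss" by (rule product_prob_gauss)
  have zJ: "z \<in> J" using Suc.prems by (simp add: z_def J_def)
  have fin: "finite (J - {z})" by (simp add: J_def)
  have inner: "(\<integral>\<^sup>+ x. indicator Nset (X'(z:=x)) \<partial>gauss) = 0" for X'
  proof -
    define a where "a = det (mat m m X')"
    define b where "b = det (mat (Suc m) (Suc m) (X'(z:=0)))"
    have key: "indicator Nset (X'(z:=x)) \<le> (indicator {-b/a} x :: ennreal)" for x
    proof (cases "X'(z:=x) \<in> Nset")
      case True
      then have h1: "det (mat m m (X'(z:=x))) \<noteq> (0::real)" and h2: "det (mat (Suc m) (Suc m) (X'(z:=x))) = (0::real)"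
        by (auto simp: Nset_def)
      have "a \<noteq> 0" using h1 by (simp add: a_def z_def mat_small_upd)
      moreover have "x * a + b = 0" using h2 det_affine[of m X' x] by (simp add: a_def b_def z_def)
      ultimately have "x = -b/a" by (simp add: field_simps)
      then show ?thesis by (simp add: indicator_def)
    qed simp
    have "(\<integral>\<^sup>+ x. indicator Nset (X'(z:=x)) \<partial>gauss) \<le> (\<integral>\<^sup>+ x. indicator {-b/a} x \<partial>gauss)"
      by (rule nn_integral_mono) (rule key)
    also have "\<dots> = emeasure gauss {-b/a}" by (simp add: sets_gauss)
    also have "\<dots> = 0" by (rule gauss_singleton)
    finally show ?thesis by simp
  qed
  have PiJ: "PiM (insert z (J-{z})) (\<lambda>_. gauss) = Q" unfolding Q_def insert_Diff[OF zJ] ..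
  have "emeasure Q Nset = (\<integral>\<^sup>+ X. indicator Nset X \<partial>PiM (insert z (J-{z})) (\<lambda>_. gauss))"
    unfolding PiJ by (rule nn_integral_indicator[OF Nset_sets, symmetric])
  also have "\<dots> = (\<integral>\<^sup>+ X'. (\<integral>\<^sup>+ x. indicator Nset (X'(z:=x)) \<partial>gauss) \<partial>PiM (J - {z}) (\<lambda>_. gauss))"
    apply (rule product_nn_integral_insert[OF fin])
     apply blast
    apply (unfold PiJ)
    apply (rule borel_measurable_indicator[OF Nset_sets])
    done
  also have "\<dots> = 0" unfolding inner by simp
  finally have "Nset \<in> null_sets Q" using Nset_sets by auto
  then have "AE X in Q. X \<notin> Nset" by (rule AE_not_in)
  then have "AE X in Q. det (mat (Suc m) (Suc m) X) \<noteq> (0::real)"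
    using IH AE_space by eventually_elim (auto simp: Nset_def)
  then show ?case unfolding Q_def J_def .
qed


lemma solve_lin:
  fixes X :: "nat\<times>nat \<Rightarrow> real" and b :: "nat \<Rightarrow> real"
  assumes d: "det (mat n n X) \<noteq> 0"
  shows "\<exists>c. \<forall>i<n. (\<Sum>j<n. X (i,j) * c j) = b i"
proof -
  define A where "A = mat n n X"
  have A: "A \<in> carrier_mat n n" by (simp add: A_def)
  define D where "D = adj_mat A"
  have D: "D \<in> carrier_mat n n" using adj_mat(1)[OF A] by (simp add: D_def)
  have AD: "A * D = det A \<cdot>\<^sub>m 1\<^sub>m n" using adj_mat(2)[OF A] by (simp add: D_def)
  have ent: "(\<Sum>j<n. X (i,j) * D $$ (j,l)) = (if i = l then det A else 0)" if "i < n" "l < n" for i l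
  proof -
    have "(A * D) $$ (i,l) = (\<Sum>j<n. X (i,j) * D $$ (j,l))"
      using A D that by (simp add: scalar_prod_def A_def atLeast0LessThan)
    then show ?thesis using AD that by (auto split: if_splits)
  qed
  define c where "c j = (\<Sum>l<n. D $$ (j,l) * b l) / det A" for j
  have "(\<Sum>j<n. X (i,j) * c j) = b i" if i: "i < n" for i
  proof -
    have "(\<Sum>j<n. X (i,j) * c j) = (\<Sum>j<n. \<Sum>l<n. X (i,j) * D $$ (j,l) * b l) / det A"
      unfolding c_def by (simp add: sum_divide_distrib sum_distrib_left mult.assoc)
    also have "\<dots> = (\<Sum>l<n. (\<Sum>j<n. X (i,j) * D $$ (j,l)) * b l) / det A"
      by (subst sum.swap) (simp add: sum_distrib_right)
    also have "\<dots> = (\<Sum>l<n. (if i = l then det A * b l else 0)) / det A"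
      by (rule arg_cong[where f="\<lambda>x. x / det A"], rule sum.cong) (use ent i in auto)
    also have "\<dots> = b i" using i d by (simp add: A_def)
    finally show ?thesis .
  qed
  then show ?thesis by blast
qed


lemma psf_lborel: "product_sigma_finite (\<lambda>_::nat. lborel::real measure)"
  unfolding product_sigma_finite_def by (simp add: lborel.sigma_finite_measure_axioms)

lemma emeasure_box:
  fixes I :: "nat set"
  assumes "finite I"
  shows "emeasure (PiM I (\<lambda>_. lborel)) (PiE I (\<lambda>i. {\<alpha> i..\<beta> i})) = ennreal (\<Prod>i\<in>I. max 0 (\<beta> i - \<alpha> i))"
proof -
  interpret product_sigma_finite "\<lambda>_::nat. lborel::real measure" by (rule psf_lborel)
  have "emeasure (PiM I (\<lambda>_. lborel)) (PiE I (\<lambda>i. {\<alpha> i..\<beta> i})) = (\<Prod>i\<in>I. emeasure lborel {\<alpha> i..\<beta> i})"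
    by (rule emeasure_PiM[OF assms]) simp
  also have "\<dots> = (\<Prod>i\<in>I. ennreal (max 0 (\<beta> i - \<alpha> i)))"
    by (rule prod.cong) (auto simp: emeasure_lborel_Icc_eq max_def)
  also have "\<dots> = ennreal (\<Prod>i\<in>I. max 0 (\<beta> i - \<alpha> i))"
    by (rule prod_ennreal) simp
  finally show ?thesis .
qed

lemma measure_box:
  fixes I :: "nat set"
  assumes "finite I"
  shows "measure (PiM I (\<lambda>_. lborel)) (PiE I (\<lambda>i. {\<alpha> i..\<beta> i})) = (\<Prod>i\<in>I. max 0 (\<beta> i - \<alpha> i))"
  unfolding measure_def emeasure_box[OF assms] by (simp add: prod_nonneg)

lemma box_sets: "finite I \<Longrightarrow> PiE I (\<lambda>i. {\<alpha> i..\<beta> i}) \<in> sets (PiM I (\<lambda>_. lborel::real measure))"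
  by (rule sets_PiM_I_finite) auto

lemma trans_meas:
  fixes d :: "nat \<Rightarrow> real"
  shows "(\<lambda>\<theta>. \<lambda>i\<in>I. \<theta> i + d i) \<in> measurable (PiM I (\<lambda>_. lborel)) (PiM I (\<lambda>_. lborel))"
  by measurable

lemma trans_inv:
  fixes I :: "nat set" and d :: "nat \<Rightarrow> real"
  assumes "finite I"
  shows "distr (PiM I (\<lambda>_. lborel)) (PiM I (\<lambda>_. lborel)) (\<lambda>\<theta>. \<lambda>i\<in>I. \<theta> i + d i) = PiM I (\<lambda>_. lborel)"
proof -
  interpret product_sigma_finite "\<lambda>_::nat. lborel::real measure" by (rule psf_lborel)
  show ?thesis
  proof (rule PiM_eqI[OF assms])
    show "sets (distr (PiM I (\<lambda>_. lborel)) (PiM I (\<lambda>_. lborel)) (\<lambda>\<theta>. \<lambda>i\<in>I. \<theta> i + d i)) = sets (PiM I (\<lambda>_. lborel))"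
      by simp
    fix A :: "nat \<Rightarrow> real set" assume A: "\<And>i. i \<in> I \<Longrightarrow> A i \<in> sets lborel"
    have pre: "(\<lambda>\<theta>. \<lambda>i\<in>I. \<theta> i + d i) -` PiE I A \<inter> space (PiM I (\<lambda>_. lborel))
        = PiE I (\<lambda>i. (\<lambda>x. d i + x) -` A i)"
      by (auto simp: space_PiM PiE_def Pi_def extensional_def add.commute)
    have "emeasure (distr (PiM I (\<lambda>_. lborel)) (PiM I (\<lambda>_. lborel)) (\<lambda>\<theta>. \<lambda>i\<in>I. \<theta> i + d i)) (PiE I A)
        = emeasure (PiM I (\<lambda>_. lborel)) (PiE I (\<lambda>i. (\<lambda>x. d i + x) -` A i))"
      apply (subst emeasure_distr[OF trans_meas])
       apply (rule sets_PiM_I_finite[OF assms]) using A apply simp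
      unfolding pre ..
    also have "\<dots> = (\<Prod>i\<in>I. emeasure lborel ((\<lambda>x. d i + x) -` A i))"
      apply (rule emeasure_PiM[OF assms])
      subgoal for i
      proof -
        have "(\<lambda>x::real. d i + x) \<in> borel_measurable borel" by measurable
        assume "i \<in> I" then show ?thesis using A[of i] measurable_sets_borel[where f="\<lambda>x. d i + x" and A="A i" and M=borel] \<open>(\<lambda>x::real. d i + x) \<in> borel_measurable borel\<close> by simp
      qed
      done
    also have "\<dots> = (\<Prod>i\<in>I. emeasure lborel (A i))"
    proof (rule prod.cong[OF refl])
      fix i assume i: "i \<in> I"
      have "emeasure lborel (A i) = emeasure (distr lborel borel ((+) (d i))) (A i)"
        by (simp add: lborel_distr_plus)
      also have "\<dots> = emeasure lborel ((+) (d i) -` A i \<inter> space lborel)"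
        by (rule emeasure_distr) (use A i in auto)
      finally show "emeasure lborel ((\<lambda>x. d i + x) -` A i) = emeasure lborel (A i)" by simp
    qed
    finally show "emeasure (distr (PiM I (\<lambda>_. lborel)) (PiM I (\<lambda>_. lborel)) (\<lambda>\<theta>. \<lambda>i\<in>I. \<theta> i + d i)) (PiE I A) = (\<Prod>i\<in>I. emeasure lborel (A i))" .
  qed
qed

lemma shift_bound:
  fixes I :: "nat set" and a W :: real and d :: "nat \<Rightarrow> real" and S :: "(nat \<Rightarrow> real) set"
  assumes fin: "finite I" and W: "W > 0" and S: "S \<in> sets (PiM I (\<lambda>_. lborel))"
  defines "P \<equiv> PiM I (\<lambda>_. lborel::real measure)"
  defines "B \<equiv> PiE I (\<lambda>_. {a..a+W})"
  defines "T \<equiv> (\<lambda>\<theta>. \<lambda>i\<in>I. \<theta> i + d i)"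
  shows "measure (uniform_measure P B) {\<theta>\<in>space P. T \<theta> \<in> S} - measure (uniform_measure P B) S
     \<le> 1 - (\<Prod>i\<in>I. max 0 (W - \<bar>d i\<bar>)) / W ^ card I"
proof -
  define B' where "B' = PiE I (\<lambda>i. {a + d i..a + W + d i})"
  have Bs: "B \<in> sets P" unfolding B_def P_def by (rule box_sets[OF fin])
  have B's: "B' \<in> sets P" unfolding B'_def P_def by (rule box_sets[OF fin])
  have Ss: "S \<in> sets P" using S by (simp add: P_def)
  have Tm: "T \<in> measurable P P" unfolding T_def P_def by (rule trans_meas)
  have PB: "measure P B = W ^ card I"
    unfolding P_def B_def using measure_box[OF fin, of "\<lambda>_. a" "\<lambda>_. a + W"] W by simp
  have ePB: "emeasure P B = ennreal (W ^ card I)"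
    unfolding P_def B_def using emeasure_box[OF fin, of "\<lambda>_. a" "\<lambda>_. a + W"] W by simp
  have PB': "measure P B' = W ^ card I"
    unfolding P_def B'_def using measure_box[OF fin, of "\<lambda>i. a + d i" "\<lambda>i. a + W + d i"] W by simp
  have ePB': "emeasure P B' = ennreal (W ^ card I)"
    unfolding P_def B'_def using emeasure_box[OF fin, of "\<lambda>i. a + d i" "\<lambda>i. a + W + d i"] W by simp
  have Wpos: "W ^ card I > 0" using W by simp
  have BB': "B' \<inter> B = PiE I (\<lambda>i. {max a (a + d i)..min (a + W) (a + W + d i)})"
    unfolding B_def B'_def by (auto simp: PiE_def Pi_def)
  have PBB': "measure P (B' \<inter> B) = (\<Prod>i\<in>I. max 0 (W - \<bar>d i\<bar>))"
    unfolding BB' P_def measure_box[OF fin]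
    by (rule prod.cong) (auto simp: max_def min_def abs_if)
  have BB's: "B' \<inter> B \<in> sets P" using Bs B's by auto
  define Tpre where "Tpre = {\<theta>\<in>space P. T \<theta> \<in> S}"
  have Tpre_s: "Tpre \<in> sets P" unfolding Tpre_def using measurable_sets[OF Tm Ss] by (simp add: vimage_def Int_def conj_commute)
  have key: "B \<inter> Tpre = T -` (S \<inter> B') \<inter> space P"
  proof -
    have "\<theta> \<in> B \<longleftrightarrow> T \<theta> \<in> B'" if "\<theta> \<in> space P" for \<theta>
      using that unfolding B_def B'_def T_def P_def by (auto simp: space_PiM PiE_def Pi_def extensional_def)
    moreover have "B \<subseteq> space P" using Bs sets.sets_into_space by blast
    ultimately show ?thesis unfolding Tpre_def by blast
  qed
  have "measure P (B \<inter> Tpre) = measure (distr P P T) (S \<inter> B')"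
    unfolding key by (rule measure_distr[symmetric, OF Tm]) (use Ss B's in auto)
  also have "distr P P T = P" unfolding P_def T_def by (rule trans_inv[OF fin])
  finally have e1: "measure P (B \<inter> Tpre) = measure P (S \<inter> B')" .
  have fB: "B \<in> fmeasurable P" using Bs ePB by (intro fmeasurableI) auto
  have fB': "B' \<in> fmeasurable P" using B's ePB' by (intro fmeasurableI) auto
  have "measure P (S \<inter> B') \<le> measure P ((B \<inter> S) \<union> (B' - B))"
  proof (rule measure_mono_fmeasurable)
    show "S \<inter> B' \<subseteq> B \<inter> S \<union> (B' - B)" by auto
    show "S \<inter> B' \<in> sets P" using Ss B's by auto
    show "B \<inter> S \<union> (B' - B) \<in> fmeasurable P"
      using fB fB' Ss by (intro fmeasurable.Un fmeasurable.Diff) (auto intro: fmeasurable_Int_fmeasurable)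
  qed
  also have "\<dots> \<le> measure P (B \<inter> S) + measure P (B' - B)"
    by (rule measure_Un_le) (use Bs B's Ss in auto)
  also have "measure P (B' - B) = measure P (B' - (B' \<inter> B))"
    by (rule arg_cong[where f="measure P"]) blast
  also have "\<dots> = W ^ card I - (\<Prod>i\<in>I. max 0 (W - \<bar>d i\<bar>))"
    using measure_Diff[of P B' "B' \<inter> B"] ePB' B's BB's PB' PBB' by auto
  finally have ineq: "measure P (B \<inter> Tpre) - measure P (B \<inter> S) \<le> W ^ card I - (\<Prod>i\<in>I. max 0 (W - \<bar>d i\<bar>))"
    using e1 by linarith
  have ne0: "emeasure P B \<noteq> 0" using ePB W by simp
  have neinf: "emeasure P B \<noteq> \<infinity>" using ePB by simp
  have e2: "measure (uniform_measure P B) Tpre = measure P (B \<inter> Tpre) / W ^ card I"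
    using measure_uniform_measure[OF ne0 neinf Tpre_s] PB by simp
  have e3: "measure (uniform_measure P B) S = measure P (B \<inter> S) / W ^ card I"
    using measure_uniform_measure[OF ne0 neinf Ss] PB by simp
  have "measure (uniform_measure P B) Tpre - measure (uniform_measure P B) S
      = (measure P (B \<inter> Tpre) - measure P (B \<inter> S)) / W ^ card I"
    unfolding e2 e3 by (simp add: diff_divide_distrib)
  also have "\<dots> \<le> (W ^ card I - (\<Prod>i\<in>I. max 0 (W - \<bar>d i\<bar>))) / W ^ card I"
    by (rule divide_right_mono[OF ineq]) (use Wpos in simp)
  also have "\<dots> = 1 - (\<Prod>i\<in>I. max 0 (W - \<bar>d i\<bar>)) / W ^ card I"
    using W by (simp add: diff_divide_distrib)
  finally show ?thesis unfolding Tpre_def .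
qed


lemma sets_PiM_gauss: "sets (PiM J (\<lambda>_. gauss)) = sets (PiM J (\<lambda>_. borel))"
  by (rule sets_PiM_cong) (auto simp: sets_gauss)

lemma sets_noise: "sets (noise_space n p) = sets (obs_space n p)"
  unfolding noise_space_def obs_space_def by (intro sets_pair_measure_cong sets_PiM_gauss)

lemma space_noise: "space (noise_space n p) = space (obs_space n p)"
  by (rule sets_eq_imp_space_eq[OF sets_noise])

lemma prob_noise: "prob_space (noise_space n p)"
  unfolding noise_space_def
  by (rule prob_space_pair; rule prob_space_PiM; rule gauss_prob)

lemma obs_map_eq: "obs_map n p \<sigma> \<theta> \<omega> = ((\<lambda>i\<in>{..<n}. (\<Sum>j<p. snd \<omega> (i,j) * \<theta> j) + \<sigma> * fst \<omega> i), snd \<omega>)"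
  unfolding obs_map_def by (cases \<omega>) simp

lemma obs_meas_gen:
  assumes g: "g \<in> measurable M (obs_space n p)"
    and f: "\<And>j. j < p \<Longrightarrow> (\<lambda>x. f x j) \<in> borel_measurable M"
  shows "(\<lambda>x. obs_map n p \<sigma> (f x) (g x)) \<in> measurable M (obs_space n p)"
proof -
  have g1: "(\<lambda>x. fst (g x)) \<in> measurable M (PiM {..<n} (\<lambda>_. borel))"
    using g unfolding obs_space_def by (rule measurable_fst')
  have g2: "(\<lambda>x. snd (g x)) \<in> measurable M (PiM ({..<n}\<times>{..<p}) (\<lambda>_. borel))"
    using g unfolding obs_space_def by (rule measurable_snd')
  have c1: "(\<lambda>x. fst (g x) i) \<in> borel_measurable M" if "i < n" for i
    using that by (intro measurable_compose[OF g1 measurable_component_singleton]) blast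
  have c2: "(\<lambda>x. snd (g x) (i,j)) \<in> borel_measurable M" if "i < n" "j < p" for i j
    using that by (intro measurable_compose[OF g2 measurable_component_singleton]) blast
  show ?thesis unfolding obs_map_eq obs_space_def
  proof (rule measurable_Pair)
    show "(\<lambda>x. \<lambda>i\<in>{..<n}. (\<Sum>j<p. snd (g x) (i, j) * f x j) + \<sigma> * fst (g x) i) \<in> M \<rightarrow>\<^sub>M PiM {..<n} (\<lambda>_. borel)"
    proof (rule measurable_restrict)
      fix i assume "i \<in> {..<n}"
      then have i: "i < n" by simp
      have s: "(\<lambda>x. \<Sum>j<p. snd (g x) (i, j) * f x j) \<in> borel_measurable M"
      proof (rule borel_measurable_sum)
        fix j assume "j \<in> {..<p}"
        then have j: "j < p" by simp
        show "(\<lambda>x. snd (g x) (i, j) * f x j) \<in> borel_measurable M"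
          by (rule borel_measurable_times[OF c2[OF i j] f[OF j]])
      qed
      show "(\<lambda>x. (\<Sum>j<p. snd (g x) (i, j) * f x j) + \<sigma> * fst (g x) i) \<in> borel_measurable M"
        by (rule borel_measurable_add[OF s borel_measurable_times[OF borel_measurable_const c1[OF i]]])
    qed
  qed (rule g2)
qed

lemma obs_meas_fixed: "obs_map n p \<sigma> \<theta> \<in> measurable (noise_space n p) (obs_space n p)"
proof -
  have id: "(\<lambda>x. x) \<in> measurable (noise_space n p) (obs_space n p)"
    by (rule measurable_ident_sets[OF sets_noise])
  have "(\<lambda>x. obs_map n p \<sigma> ((\<lambda>x. \<theta>) x) ((\<lambda>x. x) x)) \<in> measurable (noise_space n p) (obs_space n p)"
    by (rule obs_meas_gen[OF id borel_measurable_const])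
  then show ?thesis by simp
qed

lemma test_comp_meas:
  assumes "is_test n p \<phi>" and "h \<in> measurable M (obs_space n p)"
  shows "{x\<in>space M. \<phi> (h x) = b} \<in> sets M"
proof -
  have "\<phi> \<in> measurable (obs_space n p) (count_space UNIV)" using assms(1) by (simp add: is_test_def)
  then have m: "(\<lambda>x. \<phi> (h x)) \<in> measurable M (count_space UNIV)"
    by (rule measurable_compose[OF assms(2)])
  have "(\<lambda>x. \<phi> (h x)) -` {b} \<inter> space M \<in> sets M" by (rule measurable_sets[OF m]) simp
  moreover have "(\<lambda>x. \<phi> (h x)) -` {b} \<inter> space M = {x\<in>space M. \<phi> (h x) = b}" by blast
  ultimately show ?thesis by simp
qed

lemma rej_prob_eq:
  assumes phi: "is_test n p \<phi>"
  shows "rej_prob n p \<sigma> \<theta> \<phi> b = measure (noise_space n p) {\<omega>\<in>space (noise_space n p). \<phi> (obs_map n p \<sigma> \<theta> \<omega>) = b}"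
proof -
  have A: "{\<omega>\<in>space (obs_space n p). \<phi> \<omega> = b} \<in> sets (obs_space n p)"
    using test_comp_meas[OF phi measurable_ident] by simp
  have "rej_prob n p \<sigma> \<theta> \<phi> b = measure (noise_space n p) (obs_map n p \<sigma> \<theta> -` {\<omega>\<in>space (obs_space n p). \<phi> \<omega> = b} \<inter> space (noise_space n p))"
    unfolding rej_prob_def law_def by (rule measure_distr[OF obs_meas_fixed A])
  also have "obs_map n p \<sigma> \<theta> -` {\<omega>\<in>space (obs_space n p). \<phi> \<omega> = b} \<inter> space (noise_space n p)
     = {\<omega>\<in>space (noise_space n p). \<phi> (obs_map n p \<sigma> \<theta> \<omega>) = b}"
    using measurable_space[OF obs_meas_fixed] by blast
  finally show ?thesis .
qed

definition Fp :: "nat \<Rightarrow> nat \<Rightarrow> real \<Rightarrow> ((nat \<Rightarrow> real) \<times> (nat \<times> nat \<Rightarrow> real) \<Rightarrow> nat) \<Rightarrow> (nat \<Rightarrow> real) \<Rightarrow> real" where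
  "Fp n p \<sigma> \<phi> \<theta> = (\<integral>\<omega>. real (\<phi> (obs_map n p \<sigma> \<theta> \<omega>)) \<partial>noise_space n p)"

lemma rej1:
  assumes phi: "is_test n p \<phi>"
  shows "rej_prob n p \<sigma> \<theta> \<phi> 1 = Fp n p \<sigma> \<phi> \<theta>"
proof -
  define C where "C = {\<omega>\<in>space (noise_space n p). \<phi> (obs_map n p \<sigma> \<theta> \<omega>) = 1}"
  have "Fp n p \<sigma> \<phi> \<theta> = (\<integral>\<omega>. indicator C \<omega> \<partial>noise_space n p)"
    unfolding Fp_def
  proof (rule Bochner_Integration.integral_cong[OF refl])
    fix \<omega> assume "\<omega> \<in> space (noise_space n p)"
    moreover have "\<phi> (obs_map n p \<sigma> \<theta> \<omega>) \<in> {0,1}" using phi unfolding is_test_def by blast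
    ultimately show "real (\<phi> (obs_map n p \<sigma> \<theta> \<omega>)) = indicator C \<omega>"
      unfolding C_def by (auto simp: indicator_def)
  qed
  also have "\<dots> = measure (noise_space n p) C"
    by (simp add: C_def Int_absorb2)
  finally show ?thesis using rej_prob_eq[OF phi] by (simp add: C_def)
qed

lemma rej0:
  assumes phi: "is_test n p \<phi>"
  shows "rej_prob n p \<sigma> \<theta> \<phi> 0 = 1 - Fp n p \<sigma> \<phi> \<theta>"
proof -
  interpret prob_space "noise_space n p" by (rule prob_noise)
  define C where "C = {\<omega>\<in>space (noise_space n p). \<phi> (obs_map n p \<sigma> \<theta> \<omega>) = 1}"
  have Cs: "C \<in> sets (noise_space n p)" unfolding C_def by (rule test_comp_meas[OF phi obs_meas_fixed])
  have "{\<omega>\<in>space (noise_space n p). \<phi> (obs_map n p \<sigma> \<theta> \<omega>) = 0} = space (noise_space n p) - C"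
  proof -
    have "\<phi> (obs_map n p \<sigma> \<theta> \<omega>) \<in> {0,1}" for \<omega> using phi unfolding is_test_def by blast
    then show ?thesis unfolding C_def by fastforce
  qed
  then have "rej_prob n p \<sigma> \<theta> \<phi> 0 = 1 - measure (noise_space n p) C"
    using rej_prob_eq[OF phi, of \<sigma> \<theta> 0] prob_compl[OF Cs] by simp
  also have "measure (noise_space n p) C = rej_prob n p \<sigma> \<theta> \<phi> 1"
    using rej_prob_eq[OF phi, of \<sigma> \<theta> 1] by (simp add: C_def)
  finally show ?thesis using rej1[OF phi] by simp
qed

lemma Fp_bounds:
  assumes phi: "is_test n p \<phi>"
  shows "0 \<le> Fp n p \<sigma> \<phi> \<theta>" "Fp n p \<sigma> \<phi> \<theta> \<le> 1"
proof -
  interpret prob_space "noise_space n p" by (rule prob_noise)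
  have e: "Fp n p \<sigma> \<phi> \<theta> = prob {\<omega>\<in>space (noise_space n p). \<phi> (obs_map n p \<sigma> \<theta> \<omega>) = 1}"
    using rej1[OF phi, of \<sigma> \<theta>] rej_prob_eq[OF phi, of \<sigma> \<theta> 1] by simp
  show "0 \<le> Fp n p \<sigma> \<phi> \<theta>" unfolding e by (rule measure_nonneg)
  show "Fp n p \<sigma> \<phi> \<theta> \<le> 1" unfolding e by (rule prob_le_1)
qed

lemma ext_null:
  assumes "k0 < p"
  shows "(\<lambda>j. if j < k0 then \<theta> j else 0) \<in> B0 p k0"
proof -
  have "{j\<in>{..<p}. (if j < k0 then \<theta> j else 0) \<noteq> (0::real)} \<subseteq> {..<k0}" by auto
  then have "card {j\<in>{..<p}. (if j < k0 then \<theta> j else 0) \<noteq> (0::real)} \<le> card {..<k0}"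
    by (rule card_mono[rotated]) simp
  then show ?thesis using assms unfolding B0_def vecs_def l0_def by auto
qed

lemma zero_B0: "(\<lambda>_. 0) \<in> B0 p k"
  unfolding B0_def vecs_def l0_def by simp

lemma B0_has_zero:
  assumes u: "u \<in> B0 p k0" and "k0 < p"
  shows "\<exists>j\<le>k0. u j = 0"
proof (rule ccontr)
  assume "\<not> (\<exists>j\<le>k0. u j = 0)"
  then have "{..k0} \<subseteq> {j\<in>{..<p}. u j \<noteq> 0}" using assms(2) by auto
  then have "card {..k0} \<le> card {j\<in>{..<p}. u j \<noteq> 0}" by (rule card_mono[rotated]) simp
  moreover have "card {j\<in>{..<p}. u j \<noteq> 0} \<le> k0" using u unfolding B0_def l0_def by simp
  ultimately show False by simp
qed

lemma alt_mem:
  fixes t :: real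
  assumes "k0 < p" "1 \<le> \<Delta>" "t > 0" and th: "\<And>i. i < k0 \<Longrightarrow> \<theta> i \<ge> t"
  defines "v \<equiv> (\<lambda>j. if j < k0 then \<theta> j else 0)(k0 := t)"
  shows "v \<in> B0 p (k0 + \<Delta>)" "d2 p v (B0 p k0) \<ge> t"
proof -
  have "{j\<in>{..<p}. v j \<noteq> 0} \<subseteq> {..k0}" unfolding v_def by auto
  then have "card {j\<in>{..<p}. v j \<noteq> 0} \<le> card {..k0}"
    by (rule card_mono[rotated]) simp
  then show "v \<in> B0 p (k0 + \<Delta>)" using assms(1,2) unfolding B0_def vecs_def l0_def v_def by auto
  have vabs: "\<bar>v j\<bar> \<ge> t" if "j \<le> k0" for j
    using that th[of j] assms(3) unfolding v_def by (cases "j = k0") auto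
  show "d2 p v (B0 p k0) \<ge> t"
    unfolding d2_def
  proof (rule cInf_greatest)
    show "(\<lambda>u. l2dist p v u) ` B0 p k0 \<noteq> {}" using zero_B0 by blast
    fix x assume "x \<in> (\<lambda>u. l2dist p v u) ` B0 p k0"
    then obtain u where u: "u \<in> B0 p k0" and x: "x = l2dist p v u" by blast
    obtain j where j: "j \<le> k0" "u j = 0" using B0_has_zero[OF u assms(1)] by blast
    have jp: "j \<in> {..<p}" using j assms(1) by simp
    have "(v j - u j)\<^sup>2 \<le> (\<Sum>i<p. (v i - u i)\<^sup>2)"
      by (rule member_le_sum[OF jp]) simp_all
    then have "sqrt ((v j - u j)\<^sup>2) \<le> l2dist p v u"
      unfolding l2dist_def by (rule real_sqrt_le_mono)
    then have "\<bar>v j\<bar> \<le> l2dist p v u" using j by simp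
    then show "t \<le> x" using vabs[OF j(1)] x by simp
  qed
qed

lemma sum_ext:
  fixes k0 p :: nat
  assumes "k0 < p"
  shows "(\<Sum>j<p. X (i,j) * (if j < k0 then \<theta> j else 0)) = (\<Sum>j<k0. X (i,j) * (\<theta> j::real))"
  apply (rule sum.mono_neutral_cong_right[of "{..<p}" "{..<k0}"])
  using assms by auto

lemma sum_alt:
  fixes k0 p :: nat
  assumes "k0 < p"
  shows "(\<Sum>j<p. X (i,j) * ((\<lambda>j. if j < k0 then \<theta> j else 0)(k0 := t)) j)
     = (\<Sum>j<k0. X (i,j) * (\<theta> j::real)) + X (i,k0) * t"
proof -
  have "(\<Sum>j<p. X (i,j) * ((\<lambda>j. if j < k0 then \<theta> j else 0)(k0 := t)) j)
      = (\<Sum>j\<in>insert k0 {..<k0}. X (i,j) * ((\<lambda>j. if j < k0 then \<theta> j else 0)(k0 := t)) j)"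
    apply (rule sum.mono_neutral_cong_right[of "{..<p}" "insert k0 {..<k0}"])
    using assms by auto
  also have "\<dots> = X (i,k0) * t + (\<Sum>j<k0. X (i,j) * \<theta> j)"
    by (subst sum.insert) auto
  finally show ?thesis by simp
qed

lemma r_tendsto:
  fixes d :: "nat \<Rightarrow> real" and I :: "nat set"
  shows "(\<lambda>m. 1 - (\<Prod>i\<in>I. max 0 (real (Suc m) - \<bar>d i\<bar>)) / real (Suc m) ^ card I) \<longlonglongrightarrow> 0"
proof -
  have eq: "(\<Prod>i\<in>I. max 0 (real (Suc m) - \<bar>d i\<bar>)) / real (Suc m) ^ card I
      = (\<Prod>i\<in>I. max 0 (1 - \<bar>d i\<bar> * (1 / real (Suc m))))" for m
  proof -
    have "(\<Prod>i\<in>I. max 0 (real (Suc m) - \<bar>d i\<bar>)) / real (Suc m) ^ card I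
        = (\<Prod>i\<in>I. max 0 (real (Suc m) - \<bar>d i\<bar>) / real (Suc m))"
      by (simp add: prod_dividef)
    also have "\<dots> = (\<Prod>i\<in>I. max 0 (1 - \<bar>d i\<bar> * (1 / real (Suc m))))"
    proof (rule prod.cong[OF refl])
      fix i
      have pos: "real (Suc m) > 0" by simp
      show "max 0 (real (Suc m) - \<bar>d i\<bar>) / real (Suc m) = max 0 (1 - \<bar>d i\<bar> * (1 / real (Suc m)))"
      proof (cases "\<bar>d i\<bar> \<le> real (Suc m)")
        case True
        then have "1 - \<bar>d i\<bar> * (1 / real (Suc m)) \<ge> 0" using pos by (simp add: field_simps)
        moreover have "(real (Suc m) - \<bar>d i\<bar>) / real (Suc m) = 1 - \<bar>d i\<bar> * (1 / real (Suc m))"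
          using pos by (simp add: field_simps)
        ultimately show ?thesis using True by (simp add: max_def)
      next
        case False
        then have "1 - \<bar>d i\<bar> * (1 / real (Suc m)) \<le> 0" using pos by (simp add: field_simps)
        then show ?thesis using False by (simp add: max_def)
      qed
    qed
    finally show ?thesis .
  qed
  have inv: "(\<lambda>m. 1 / real (Suc m)) \<longlonglongrightarrow> 0"
    using LIMSEQ_Suc[OF lim_inverse_n'] .
  have "(\<lambda>m. \<Prod>i\<in>I. max 0 (1 - \<bar>d i\<bar> * (1 / real (Suc m)))) \<longlonglongrightarrow> (\<Prod>i\<in>I. max 0 (1 - \<bar>d i\<bar> * 0))"
    by (intro tendsto_prod tendsto_max tendsto_const tendsto_diff tendsto_mult inv)
  then have "(\<lambda>m. \<Prod>i\<in>I. max 0 (1 - \<bar>d i\<bar> * (1 / real (Suc m)))) \<longlonglongrightarrow> 1" by simp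
  then have "(\<lambda>m. 1 - (\<Prod>i\<in>I. max 0 (1 - \<bar>d i\<bar> * (1 / real (Suc m))))) \<longlonglongrightarrow> 1 - 1"
    by (intro tendsto_diff tendsto_const)
  then show ?thesis unfolding eq by simp
qed

lemma real_count_meas: "(\<lambda>x::nat. real x) \<in> measurable (count_space UNIV) borel"
  unfolding measurable_count_space_eq1 by (simp add: Pi_def)

lemma joint_meas:
  assumes phi: "is_test n p \<phi>"
    and sM: "sets M = sets (Pp \<Otimes>\<^sub>M noise_space n p)"
    and f: "\<And>j. j < p \<Longrightarrow> (\<lambda>x. f x j) \<in> borel_measurable Pp"
  shows "(\<lambda>(\<theta>, \<omega>). real (\<phi> (obs_map n p \<sigma> (f \<theta>) \<omega>))) \<in> borel_measurable M"
proof -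
  have g: "snd \<in> measurable (Pp \<Otimes>\<^sub>M noise_space n p) (obs_space n p)"
    by (rule measurable_compose[OF measurable_snd measurable_ident_sets[OF sets_noise]])
  have f': "(\<lambda>x. f (fst x) j) \<in> borel_measurable (Pp \<Otimes>\<^sub>M noise_space n p)" if "j < p" for j
    by (rule measurable_compose[OF measurable_fst f[OF that]])
  have o: "(\<lambda>x. obs_map n p \<sigma> (f (fst x)) (snd x)) \<in> measurable (Pp \<Otimes>\<^sub>M noise_space n p) (obs_space n p)"
    by (rule obs_meas_gen[OF g f'])
  have ph: "\<phi> \<in> measurable (obs_space n p) (count_space UNIV)" using phi by (simp add: is_test_def)
  have eq: "(\<lambda>(\<theta>, \<omega>). real (\<phi> (obs_map n p \<sigma> (f \<theta>) \<omega>))) = (\<lambda>x. real (\<phi> (obs_map n p \<sigma> (f (fst x)) (snd x))))"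
    by (rule ext) (simp add: case_prod_beta)
  show ?thesis unfolding eq measurable_cong_sets[OF sM refl]
    by (rule measurable_compose[OF measurable_compose[OF o ph] real_count_meas])
qed

lemma section_meas:
  assumes phi: "is_test n p \<phi>"
    and \<omega>: "\<omega> \<in> space (noise_space n p)"
    and f: "\<And>j. j < p \<Longrightarrow> (\<lambda>x. f x j) \<in> borel_measurable Pp"
  shows "{\<theta>\<in>space Pp. \<phi> (obs_map n p \<sigma> (f \<theta>) \<omega>) = b} \<in> sets Pp"
proof -
  have g: "(\<lambda>_. \<omega>) \<in> measurable Pp (obs_space n p)"
    by (rule measurable_const) (use \<omega> in \<open>unfold space_noise\<close>)
  have o: "(\<lambda>x. obs_map n p \<sigma> (f x) ((\<lambda>_. \<omega>) x)) \<in> measurable Pp (obs_space n p)"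
    by (rule obs_meas_gen[OF g f])
  show ?thesis using test_comp_meas[OF phi o] by simp
qed

lemma good_AE:
  fixes n p k0 :: nat
  assumes "n \<le> k0" "k0 < p"
  shows "AE \<omega> in noise_space n p. \<exists>c. \<forall>i<n. (\<Sum>j<n. snd \<omega> (i,j) * c j) = snd \<omega> (i,k0)"
proof -
  define E where "E = PiM {..<n} (\<lambda>_. gauss)"
  define Q where "Q = PiM ({..<n}\<times>{..<p}) (\<lambda>_. gauss)"
  have pE: "prob_space E" unfolding E_def by (rule prob_space_PiM) (rule gauss_prob)
  have pQ: "prob_space Q" unfolding Q_def by (rule prob_space_PiM) (rule gauss_prob)
  have psf: "pair_sigma_finite E Q" unfolding pair_sigma_finite_def
    using prob_space_imp_sigma_finite[OF pE] prob_space_imp_sigma_finite[OF pQ] by (rule conjI)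
  have np: "n \<le> p" using assms by simp
  have dm: "(\<lambda>x. det (mat n n (snd x))) \<in> borel_measurable (E \<Otimes>\<^sub>M Q)"
    unfolding Q_def by (rule measurable_compose[OF measurable_snd det_mat_meas[OF order_refl np]])
  have s0: "{x\<in>space (E \<Otimes>\<^sub>M Q). det (mat n n (snd x)) = (0::real)} \<in> sets (E \<Otimes>\<^sub>M Q)"
    by (rule measurable_equality_set[OF dm borel_measurable_const])
  have seq: "{x\<in>space (E \<Otimes>\<^sub>M Q). det (mat n n (snd x)) \<noteq> (0::real)}
      = space (E \<Otimes>\<^sub>M Q) - {x\<in>space (E \<Otimes>\<^sub>M Q). det (mat n n (snd x)) = (0::real)}" by auto
  have s1: "{x\<in>space (E \<Otimes>\<^sub>M Q). det (mat n n (snd x)) \<noteq> (0::real)} \<in> sets (E \<Otimes>\<^sub>M Q)"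
    unfolding seq by (rule sets.Diff[OF sets.top s0])
  have inner: "AE y in Q. det (mat n n y) \<noteq> (0::real)"
    unfolding Q_def by (rule det_AE[OF order_refl np])
  have "AE x in E \<Otimes>\<^sub>M Q. det (mat n n (snd x)) \<noteq> (0::real)"
  proof (rule pair_sigma_finite.AE_pair_measure[OF psf s1])
    show "AE x in E. AE y in Q. det (mat n n (snd (x, y))) \<noteq> (0::real)"
      by (rule AE_I2) (simp add: inner)
  qed
  then have "AE x in E \<Otimes>\<^sub>M Q. \<exists>c. \<forall>i<n. (\<Sum>j<n. snd x (i,j) * c j) = snd x (i,k0)"
    by (rule eventually_mono) (rule solve_lin)
  then show ?thesis unfolding noise_space_def E_def Q_def .
qed

theorem proposition1:
  fixes n p k0 \<Delta> :: nat and \<sigma> \<gamma> \<rho> :: real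
    and \<phi> :: "(nat \<Rightarrow> real) \<times> (nat \<times> nat \<Rightarrow> real) \<Rightarrow> nat"
  assumes "1 \<le> n" and "1 \<le> k0" and "k0 < p" and "n \<le> k0"
    and "\<sigma> > 0"
    and "\<gamma> < 1/2"
    and "1 \<le> \<Delta>" and "\<Delta> \<le> p - k0"
    and "\<rho> > 0"
    and "is_test n p \<phi>"
  shows "risk n p \<sigma> \<phi> k0 \<Delta> \<rho> > \<gamma>"
proof -
  note phi = assms(10)
  have kp: "k0 < p" and nk: "n \<le> k0" and D1: "1 \<le> \<Delta>" using assms by auto
  define P where "P = PiM {..<k0} (\<lambda>_. lborel::real measure)"
  define N where "N = noise_space n p"
  define t where "t = \<rho> * \<sigma>"
  have tpos: "t > 0" using assms by (simp add: t_def)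
  define ext where "ext \<theta> = (\<lambda>j. if j < k0 then \<theta> j else (0::real))" for \<theta> :: "nat \<Rightarrow> real"
  define alt where "alt \<theta> = (ext \<theta>)(k0 := t)" for \<theta>
  define B where "B W = PiE {..<k0} (\<lambda>_. {t..t+W})" for W :: real
  define \<pi> where "\<pi> W = uniform_measure P (B W)" for W
  define \<Phi>0 where "\<Phi>0 \<theta> \<omega> = real (\<phi> (obs_map n p \<sigma> (ext \<theta>) \<omega>))" for \<theta> \<omega>
  define \<Phi>1 where "\<Phi>1 \<theta> \<omega> = real (\<phi> (obs_map n p \<sigma> (alt \<theta>) \<omega>))" for \<theta> \<omega>
  define Alt where "Alt = {\<theta> \<in> B0 p (k0 + \<Delta>). d2 p \<theta> (B0 p k0) \<ge> \<rho> * \<sigma>}"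
  define S0 where "S0 = Sup ((\<lambda>\<theta>. rej_prob n p \<sigma> \<theta> \<phi> 1) ` B0 p k0)"
  define S1 where "S1 = Sup ((\<lambda>\<theta>. rej_prob n p \<sigma> \<theta> \<phi> 0) ` Alt)"
  define H where "H W \<omega> = (\<integral>\<theta>. \<Phi>1 \<theta> \<omega> \<partial>\<pi> W) - (\<integral>\<theta>. \<Phi>0 \<theta> \<omega> \<partial>\<pi> W)" for W \<omega>
  have risk_eq: "risk n p \<sigma> \<phi> k0 \<Delta> \<rho> = S0 + S1" unfolding risk_def S0_def S1_def Alt_def ..
  interpret N: prob_space N unfolding N_def by (rule prob_noise)

  have ext_meas: "(\<lambda>x. ext x j) \<in> borel_measurable P" for j
  proof (cases "j < k0")
    case True
    have "(\<lambda>x. x j) \<in> measurable P lborel" unfolding P_def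
      by (rule measurable_component_singleton) (use True in simp)
    then have "(\<lambda>x. x j) \<in> borel_measurable P" unfolding measurable_cong_sets[OF refl sets_lborel] .
    moreover have "(\<lambda>x. ext x j) = (\<lambda>x. x j)" using True by (simp add: ext_def)
    ultimately show ?thesis by (simp only:)
  next
    case False
    then have "(\<lambda>x. ext x j) = (\<lambda>x. 0)" by (simp add: ext_def)
    then show ?thesis by (simp only:) (rule borel_measurable_const)
  qed
  have alt_meas: "(\<lambda>x. alt x j) \<in> borel_measurable P" for j
  proof (cases "j = k0")
    case True
    then have "(\<lambda>x. alt x j) = (\<lambda>x. t)" by (simp add: alt_def)
    then show ?thesis by (simp only:) (rule borel_measurable_const)
  next
    case False
    then have "(\<lambda>x. alt x j) = (\<lambda>x. ext x j)" by (simp add: alt_def)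
    then show ?thesis using ext_meas[of j] by (simp only:)
  qed

  have PB: "emeasure P (B W) = ennreal (W ^ k0)" if "W > 0" for W
    unfolding P_def B_def using emeasure_box[of "{..<k0}" "\<lambda>_. t" "\<lambda>_. t + W"] that by simp
  have Bs: "B W \<in> sets P" for W unfolding P_def B_def by (rule box_sets) simp
  have piprob: "prob_space (\<pi> W)" if "W > 0" for W
    unfolding \<pi>_def by (rule prob_space_uniform_measure) (use PB[OF that] that in simp_all)
  have sets_pi: "sets (\<pi> W) = sets P" for W unfolding \<pi>_def by (rule sets_uniform_measure)
  have space_pi: "space (\<pi> W) = space P" for W unfolding \<pi>_def by (rule space_uniform_measure)
  have psf: "pair_sigma_finite (\<pi> W) N" if "W > 0" for W
    unfolding pair_sigma_finite_def
    using prob_space_imp_sigma_finite[OF piprob[OF that]] prob_space_imp_sigma_finite[OF N.prob_space_axioms] by (rule conjI)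

  have Phi0_meas: "(\<lambda>(\<theta>, \<omega>). \<Phi>0 \<theta> \<omega>) \<in> borel_measurable (\<pi> W \<Otimes>\<^sub>M N)" for W
    unfolding \<Phi>0_def N_def
    by (rule joint_meas[OF phi _ ext_meas]) (rule sets_pair_measure_cong[OF sets_pi refl])
  have Phi1_meas: "(\<lambda>(\<theta>, \<omega>). \<Phi>1 \<theta> \<omega>) \<in> borel_measurable (\<pi> W \<Otimes>\<^sub>M N)" for W
    unfolding \<Phi>1_def N_def
    by (rule joint_meas[OF phi _ alt_meas]) (rule sets_pair_measure_cong[OF sets_pi refl])
  have phi01: "\<phi> \<omega> \<in> {0,1}" for \<omega> using phi unfolding is_test_def by blast
  have Phi_bound: "norm (real (\<phi> \<omega>)) \<le> 1" for \<omega> using phi01[of \<omega>] by auto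
  have phile: "\<phi> \<omega> \<le> Suc 0" for \<omega> using phi01[of \<omega>] by auto
  have Phi0_int: "integrable (\<pi> W \<Otimes>\<^sub>M N) (\<lambda>(\<theta>, \<omega>). \<Phi>0 \<theta> \<omega>)" if "W > 0" for W
  proof -
    interpret pp: prob_space "\<pi> W \<Otimes>\<^sub>M N" by (rule prob_space_pair[OF piprob[OF that] N.prob_space_axioms])
    show ?thesis
      apply (rule pp.integrable_const_bound[OF _ Phi0_meas, of 1])
    proof (rule AE_I2)
      fix x show "norm (case x of (\<theta>, \<omega>) \<Rightarrow> \<Phi>0 \<theta> \<omega>) \<le> 1"
        by (cases x) (simp add: \<Phi>0_def phile)
    qed
  qed
  have Phi1_int: "integrable (\<pi> W \<Otimes>\<^sub>M N) (\<lambda>(\<theta>, \<omega>). \<Phi>1 \<theta> \<omega>)" if "W > 0" for W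
  proof -
    interpret pp: prob_space "\<pi> W \<Otimes>\<^sub>M N" by (rule prob_space_pair[OF piprob[OF that] N.prob_space_axioms])
    show ?thesis
      apply (rule pp.integrable_const_bound[OF _ Phi1_meas, of 1])
    proof (rule AE_I2)
      fix x show "norm (case x of (\<theta>, \<omega>) \<Rightarrow> \<Phi>1 \<theta> \<omega>) \<le> 1"
        by (cases x) (simp add: \<Phi>1_def phile)
    qed
  qed
  have bdd1: "bdd_above ((\<lambda>\<theta>. rej_prob n p \<sigma> \<theta> \<phi> 1) ` B0 p k0)"
  proof (rule bdd_aboveI[where M=1])
    fix x assume "x \<in> (\<lambda>\<theta>. rej_prob n p \<sigma> \<theta> \<phi> 1) ` B0 p k0"
    then obtain \<theta> where "x = rej_prob n p \<sigma> \<theta> \<phi> 1" by blast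
    then show "x \<le> 1" using rej1[OF phi, of \<sigma> \<theta>] Fp_bounds(2)[OF phi, of \<sigma> \<theta>] by linarith
  qed
  have bdd0: "bdd_above ((\<lambda>\<theta>. rej_prob n p \<sigma> \<theta> \<phi> 0) ` Alt)"
  proof (rule bdd_aboveI[where M=1])
    fix x assume "x \<in> (\<lambda>\<theta>. rej_prob n p \<sigma> \<theta> \<phi> 0) ` Alt"
    then obtain \<theta> where "x = rej_prob n p \<sigma> \<theta> \<phi> 0" by blast
    then show "x \<le> 1" using rej0[OF phi, of \<sigma> \<theta>] Fp_bounds(1)[OF phi, of \<sigma> \<theta>] by linarith
  qed
  have inB: "\<theta> i \<ge> t" if "\<theta> \<in> B W" "i < k0" for \<theta> W i
    using that unfolding B_def by auto
  have key: "S0 + S1 \<ge> 1 - (\<integral>\<omega>. H W \<omega> \<partial>N) \<and> integrable N (H W)" if W: "W > 0" for W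
  proof -
    interpret pi: prob_space "\<pi> W" by (rule piprob[OF W])
    define I0 where "I0 = (\<integral>\<theta>. (\<integral>\<omega>. \<Phi>0 \<theta> \<omega> \<partial>N) \<partial>\<pi> W)"
    define I1 where "I1 = (\<integral>\<theta>. (\<integral>\<omega>. \<Phi>1 \<theta> \<omega> \<partial>N) \<partial>\<pi> W)"
    have in0: "(\<integral>\<omega>. \<Phi>0 \<theta> \<omega> \<partial>N) = rej_prob n p \<sigma> (ext \<theta>) \<phi> 1" for \<theta>
      unfolding rej1[OF phi] Fp_def \<Phi>0_def N_def ..
    have in1: "(\<integral>\<omega>. \<Phi>1 \<theta> \<omega> \<partial>N) = 1 - rej_prob n p \<sigma> (alt \<theta>) \<phi> 0" for \<theta>
      unfolding rej0[OF phi] Fp_def \<Phi>1_def N_def by simp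
    have int0: "integrable (\<pi> W) (\<lambda>\<theta>. \<integral>\<omega>. \<Phi>0 \<theta> \<omega> \<partial>N)"
      by (rule pair_sigma_finite.integrable_fst[OF psf[OF W] Phi0_int[OF W]])
    have int1: "integrable (\<pi> W) (\<lambda>\<theta>. \<integral>\<omega>. \<Phi>1 \<theta> \<omega> \<partial>N)"
      by (rule pair_sigma_finite.integrable_fst[OF psf[OF W] Phi1_int[OF W]])
    have "AE \<theta> in \<pi> W. (\<integral>\<omega>. \<Phi>0 \<theta> \<omega> \<partial>N) \<le> S0"
      unfolding \<pi>_def
    proof (rule AE_uniform_measureI[OF Bs], rule AE_I2, rule impI)
      fix \<theta> assume "\<theta> \<in> B W"
      have "ext \<theta> \<in> B0 p k0" unfolding ext_def by (rule ext_null[OF kp])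
      then show "(\<integral>\<omega>. \<Phi>0 \<theta> \<omega> \<partial>N) \<le> S0" unfolding in0 S0_def
        by (intro cSup_upper bdd1) blast
    qed
    then have b0: "I0 \<le> S0" unfolding I0_def by (rule pi.integral_le_const[OF int0])
    have "AE \<theta> in \<pi> W. 1 - (\<integral>\<omega>. \<Phi>1 \<theta> \<omega> \<partial>N) \<le> S1"
      unfolding \<pi>_def
    proof (rule AE_uniform_measureI[OF Bs], rule AE_I2, rule impI)
      fix \<theta> assume th: "\<theta> \<in> B W"
      have "alt \<theta> \<in> B0 p (k0 + \<Delta>)" "d2 p (alt \<theta>) (B0 p k0) \<ge> t"
        unfolding alt_def ext_def using alt_mem[OF kp D1 tpos, of \<theta>] inB[OF th] by auto
      then have "alt \<theta> \<in> Alt" unfolding Alt_def t_def by blast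
      then show "1 - (\<integral>\<omega>. \<Phi>1 \<theta> \<omega> \<partial>N) \<le> S1" unfolding in1 S1_def
        by (simp, intro cSup_upper bdd0) blast
    qed
    then have "(\<integral>\<theta>. 1 - (\<integral>\<omega>. \<Phi>1 \<theta> \<omega> \<partial>N) \<partial>\<pi> W) \<le> S1"
      by (rule pi.integral_le_const[OF Bochner_Integration.integrable_diff[OF pi.integrable_const int1]])
    moreover have "(\<integral>\<theta>. 1 - (\<integral>\<omega>. \<Phi>1 \<theta> \<omega> \<partial>N) \<partial>\<pi> W) = 1 - I1"
      unfolding I1_def using Bochner_Integration.integral_diff[OF pi.integrable_const int1, of 1] pi.prob_space by simp
    ultimately have b1: "1 - I1 \<le> S1" by simp
    have F0: "(\<integral>\<omega>. (\<integral>\<theta>. \<Phi>0 \<theta> \<omega> \<partial>\<pi> W) \<partial>N) = I0"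
      unfolding I0_def by (rule pair_sigma_finite.Fubini_integral[OF psf[OF W] Phi0_int[OF W]])
    have F1: "(\<integral>\<omega>. (\<integral>\<theta>. \<Phi>1 \<theta> \<omega> \<partial>\<pi> W) \<partial>N) = I1"
      unfolding I1_def by (rule pair_sigma_finite.Fubini_integral[OF psf[OF W] Phi1_int[OF W]])
    have i0: "integrable N (\<lambda>\<omega>. \<integral>\<theta>. \<Phi>0 \<theta> \<omega> \<partial>\<pi> W)"
      by (rule pair_sigma_finite.integrable_snd[OF psf[OF W] Phi0_int[OF W]])
    have i1: "integrable N (\<lambda>\<omega>. \<integral>\<theta>. \<Phi>1 \<theta> \<omega> \<partial>\<pi> W)"
      by (rule pair_sigma_finite.integrable_snd[OF psf[OF W] Phi1_int[OF W]])
    have iH: "integrable N (H W)" unfolding H_def by (rule Bochner_Integration.integrable_diff[OF i1 i0])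
    have "(\<integral>\<omega>. H W \<omega> \<partial>N) = I1 - I0"
      unfolding H_def Bochner_Integration.integral_diff[OF i1 i0] F0 F1 ..
    then show ?thesis using b0 b1 iH by simp
  qed
  have ext_sp: "ext \<theta>' = ext \<theta>" if "\<And>i. i < k0 \<Longrightarrow> \<theta>' i = \<theta> i" for \<theta> \<theta>'
    using that unfolding ext_def by auto
  have Hbound: "H W \<omega> \<le> 1 - (\<Prod>i\<in>{..<k0}. max 0 (W - \<bar>(if i < n then t * c i else 0)\<bar>)) / W ^ k0
      \<and> H W \<omega> \<le> 1"
    if W: "W > 0" and \<omega>: "\<omega> \<in> space N" and c: "\<forall>i<n. (\<Sum>j<n. snd \<omega> (i,j) * c j) = snd \<omega> (i,k0)"
    for W \<omega> c
  proof -
    interpret pi: prob_space "\<pi> W" by (rule piprob[OF W])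
    define d where "d i = (if i < n then t * c i else 0)" for i
    define T where "T \<theta> = (\<lambda>i\<in>{..<k0}. \<theta> i + d i)" for \<theta> :: "nat \<Rightarrow> real"
    define S where "S = {\<theta>\<in>space P. \<phi> (obs_map n p \<sigma> (ext \<theta>) \<omega>) = 1}"
    have Ss: "S \<in> sets P" unfolding S_def
      by (rule section_meas[OF phi _ ext_meas]) (use \<omega> in \<open>simp add: N_def\<close>)
    have Tm: "T \<in> measurable P P" unfolding T_def P_def by (rule trans_meas)
    have obs_eq: "obs_map n p \<sigma> (alt \<theta>) \<omega> = obs_map n p \<sigma> (ext (T \<theta>)) \<omega>" for \<theta>
    proof -
      have "(\<Sum>j<p. snd \<omega> (i, j) * alt \<theta> j) = (\<Sum>j<p. snd \<omega> (i, j) * ext (T \<theta>) j)" if i: "i < n" for i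
      proof -
        have "(\<Sum>j<p. snd \<omega> (i, j) * alt \<theta> j) = (\<Sum>j<k0. snd \<omega> (i,j) * \<theta> j) + snd \<omega> (i,k0) * t"
          unfolding alt_def ext_def by (rule sum_alt[OF kp])
        moreover have "(\<Sum>j<p. snd \<omega> (i, j) * ext (T \<theta>) j) = (\<Sum>j<k0. snd \<omega> (i,j) * T \<theta> j)"
          unfolding ext_def by (rule sum_ext[OF kp])
        moreover have "(\<Sum>j<k0. snd \<omega> (i,j) * T \<theta> j) = (\<Sum>j<k0. snd \<omega> (i,j) * \<theta> j) + (\<Sum>j<k0. snd \<omega> (i,j) * d j)"
          unfolding T_def by (simp add: algebra_simps sum.distrib)
        moreover have "(\<Sum>j<k0. snd \<omega> (i,j) * d j) = (\<Sum>j<n. snd \<omega> (i,j) * (t * c j))"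
          apply (rule sum.mono_neutral_cong_right[of "{..<k0}" "{..<n}"])
          using nk by (auto simp: d_def)
        moreover have "(\<Sum>j<n. snd \<omega> (i,j) * (t * c j)) = t * snd \<omega> (i,k0)"
        proof -
          have "(\<Sum>j<n. snd \<omega> (i,j) * (t * c j)) = t * (\<Sum>j<n. snd \<omega> (i,j) * c j)"
            by (subst sum_distrib_left) (simp add: mult_ac)
          then show ?thesis using c i by simp
        qed
        ultimately show ?thesis by simp
      qed
      then show ?thesis unfolding obs_map_eq by (auto intro!: restrict_ext)
    qed
    have e0: "(\<integral>\<theta>. \<Phi>0 \<theta> \<omega> \<partial>\<pi> W) = measure (\<pi> W) S"
    proof -
      have "(\<integral>\<theta>. \<Phi>0 \<theta> \<omega> \<partial>\<pi> W) = (\<integral>\<theta>. indicator S \<theta> \<partial>\<pi> W)"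
      proof (rule Bochner_Integration.integral_cong[OF refl])
        fix \<theta> assume "\<theta> \<in> space (\<pi> W)"
        then show "\<Phi>0 \<theta> \<omega> = indicator S \<theta>"
          using phi01[of "obs_map n p \<sigma> (ext \<theta>) \<omega>"] unfolding space_pi S_def \<Phi>0_def by (auto simp: indicator_def)
      qed
      also have "\<dots> = measure (\<pi> W) S"
        using sets.sets_into_space[OF Ss] by (simp add: space_pi Int_absorb2)
      finally show ?thesis .
    qed
    have e1: "(\<integral>\<theta>. \<Phi>1 \<theta> \<omega> \<partial>\<pi> W) = measure (\<pi> W) {\<theta>\<in>space P. T \<theta> \<in> S}"
    proof -
      have "(\<integral>\<theta>. \<Phi>1 \<theta> \<omega> \<partial>\<pi> W) = (\<integral>\<theta>. indicator {\<theta>\<in>space P. T \<theta> \<in> S} \<theta> \<partial>\<pi> W)"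
      proof (rule Bochner_Integration.integral_cong[OF refl])
        fix \<theta> assume th: "\<theta> \<in> space (\<pi> W)"
        then have "T \<theta> \<in> space P" using measurable_space[OF Tm] by (simp add: space_pi)
        then show "\<Phi>1 \<theta> \<omega> = indicator {\<theta>\<in>space P. T \<theta> \<in> S} \<theta>"
          using th phi01[of "obs_map n p \<sigma> (ext (T \<theta>)) \<omega>"] unfolding space_pi S_def \<Phi>1_def obs_eq
          by (auto simp: indicator_def)
      qed
      also have "\<dots> = measure (\<pi> W) {\<theta>\<in>space P. T \<theta> \<in> S}"
        by (simp add: space_pi Int_absorb2)
      finally show ?thesis .
    qed
    have sb: "measure (\<pi> W) {\<theta>\<in>space P. T \<theta> \<in> S} - measure (\<pi> W) S
        \<le> 1 - (\<Prod>i\<in>{..<k0}. max 0 (W - \<bar>d i\<bar>)) / W ^ card {..<k0}"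
      unfolding \<pi>_def B_def P_def T_def
      by (rule shift_bound) (use W Ss in \<open>simp_all add: P_def\<close>)
    have "H W \<omega> \<le> 1 - (\<Prod>i\<in>{..<k0}. max 0 (W - \<bar>d i\<bar>)) / W ^ k0"
      using sb unfolding H_def e0 e1 by simp
    moreover have "H W \<omega> \<le> 1"
      unfolding H_def e0 e1 using pi.prob_le_1[of "{\<theta>\<in>space P. T \<theta> \<in> S}"] measure_nonneg[of "\<pi> W" S] by linarith
    ultimately show ?thesis unfolding d_def by blast
  qed
  define h where "h m = (\<lambda>\<omega>. max 0 (H (real (Suc m)) \<omega>))" for m
  have Wpos: "real (Suc m) > 0" for m by simp
  have intH: "integrable N (H (real (Suc m)))" for m using key[OF Wpos] by blast
  have hmeas: "h m \<in> borel_measurable N" for m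
    unfolding h_def by (rule borel_measurable_max[OF borel_measurable_integrable[OF intH] borel_measurable_const])
  have good: "AE \<omega> in N. \<exists>c. \<forall>i<n. (\<Sum>j<n. snd \<omega> (i,j) * c j) = snd \<omega> (i,k0)"
    unfolding N_def by (rule good_AE[OF nk kp])
  have sp: "AE \<omega> in N. \<omega> \<in> space N" by (rule AE_space)
  have conv: "AE \<omega> in N. (\<lambda>m. h m \<omega>) \<longlonglongrightarrow> 0"
    using sp good
  proof eventually_elim
    case (elim \<omega>)
    then obtain c where c: "\<forall>i<n. (\<Sum>j<n. snd \<omega> (i,j) * c j) = snd \<omega> (i,k0)" by blast
    define r where "r m = 1 - (\<Prod>i\<in>{..<k0}. max 0 (real (Suc m) - \<bar>(if i < n then t * c i else 0)\<bar>)) / real (Suc m) ^ k0" for m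
    have rt: "r \<longlonglongrightarrow> 0"
      unfolding r_def using r_tendsto[of "\<lambda>i. if i < n then t * c i else 0" "{..<k0}"] by simp
    have hb: "0 \<le> h m \<omega> \<and> h m \<omega> \<le> max 0 (r m)" for m
      using Hbound[OF Wpos elim(1) c, of m] unfolding h_def r_def by auto
    have "(\<lambda>m. max 0 (r m)) \<longlonglongrightarrow> max 0 0" by (intro tendsto_max tendsto_const rt)
    then have rt': "(\<lambda>m. max 0 (r m)) \<longlonglongrightarrow> 0" by simp
    show ?case
      by (rule tendsto_sandwich[OF _ _ tendsto_const rt']) (use hb in auto)
  qed
  have bnd: "AE \<omega> in N. norm (h m \<omega>) \<le> 1" for m
    using sp good
  proof eventually_elim
    case (elim \<omega>)
    then obtain c where c: "\<forall>i<n. (\<Sum>j<n. snd \<omega> (i,j) * c j) = snd \<omega> (i,k0)" by blast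
    show ?case using Hbound[OF Wpos elim(1) c, of m] unfolding h_def by auto
  qed
  have lim: "(\<lambda>m. \<integral>\<omega>. h m \<omega> \<partial>N) \<longlonglongrightarrow> (\<integral>\<omega>. 0 \<partial>N)"
    by (rule integral_dominated_convergence[OF borel_measurable_const hmeas N.integrable_const conv bnd])
  then have lim0: "(\<lambda>m. \<integral>\<omega>. h m \<omega> \<partial>N) \<longlonglongrightarrow> 0" by simp
  have "\<forall>\<^sub>F m in sequentially. (\<integral>\<omega>. h m \<omega> \<partial>N) < 1/2"
    by (rule order_tendstoD(2)[OF lim0]) simp
  then obtain m where m: "(\<integral>\<omega>. h m \<omega> \<partial>N) < 1/2"
    by (auto simp: eventually_sequentially)
  have inth: "integrable N (h m)" by (rule N.integrable_const_bound[OF bnd hmeas])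
  have "(\<integral>\<omega>. H (real (Suc m)) \<omega> \<partial>N) \<le> (\<integral>\<omega>. h m \<omega> \<partial>N)"
    by (rule integral_mono[OF intH inth]) (simp add: h_def)
  moreover have "S0 + S1 \<ge> 1 - (\<integral>\<omega>. H (real (Suc m)) \<omega> \<partial>N)" using key[OF Wpos] by blast
  ultimately show ?thesis unfolding risk_eq using m assms(6) by linarith
qed

end
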